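(* Let $k$ be a commutative ring and let $H$ be an FH-algebra over $k$ with FH-homomorphism $f$ and right norm $t$ (so $f(tx)=\epsilon(x)$ for all $x\in H$). Let $b\in H$ be the right distinguished group-like element, i.e. the element with $gf=g(b)f$ for every $g\in H^*$. Then $$\sum t_2\otimes t_1=\sum b^{-1}S^2(t_1)\otimes t_2 \quad\text{in } H\otimes_k H,$$ where $\Delta(t)=\sum t_1\otimes t_2$ and $S$ is the antipode.
   Context: An FH-algebra over a commutative ring $k$ is a $k$-bialgebra $H$ which is a Frobenius algebra ($H$ finitely generated projective over $k$ and there are $f\in H^*=\mathrm{Hom}_k(H,k)$ and $x_i,y_i\in H$ with $\sum_i x_i f(y_ia)=a=\sum_i f(ax_i)y_i$ for all $a\in H$) whose Frobenius homomorphism $f$ is a right integral in $H^*$, i.e. $\sum f(a_1)a_2=f(a)1$ for all $a\in H$; such $f$ is called an FH-homomorphism. An FH-algebra automatically has a bijective antipode $S$. $H^*$ carries the convolution product $(gh)(x)=\sum g(x_1)h(x_2)$, with unit $\epsilon$. A right norm $t\in H$ (with respect to $f$) is an element with $f(tx)=\epsilon(x)$ for all $x\in H$; it satisfies $ta=\epsilon(a)t$. *)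

theory Defs
  imports Complex_Main
begin

text \<open>An element of the n-fold tensor power
H (x) ... (x) H is represented by a finite formal sum of pure tensors
h1 (x) ... (x) hn, written as a list of words of length n (coefficients are
absorbed into the first factor).  The tensor product over k is the free abelian
group on such words modulo additivity in each slot and moving scalars between
adjacent slots (standard construction).  tensor_rel is the subgroup of relations.\<close>

inductive_set tensor_rel :: "('k \<Rightarrow> 'h::ab_group_add \<Rightarrow> 'h) \<Rightarrow> ('h list \<Rightarrow> int) set"
  for smul :: "'k \<Rightarrow> 'h::ab_group_add \<Rightarrow> 'h" where
  zero: "(\<lambda>_. 0) \<in> tensor_rel smul"
| add: "p \<in> tensor_rel smul \<Longrightarrow> q \<in> tensor_rel smul \<Longrightarrow> (\<lambda>w. p w + q w) \<in> tensor_rel smul"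
| neg: "p \<in> tensor_rel smul \<Longrightarrow> (\<lambda>w. - p w) \<in> tensor_rel smul"
| additive: "(\<lambda>w. of_bool (w = u @ [x + y] @ v) - of_bool (w = u @ [x] @ v)
                   - of_bool (w = u @ [y] @ v)) \<in> tensor_rel smul"
| scalar: "(\<lambda>w. of_bool (w = u @ [smul c x, y] @ v) - of_bool (w = u @ [x, smul c y] @ v))
              \<in> tensor_rel smul"

definition fsum :: "'h list list \<Rightarrow> ('h list \<Rightarrow> int)" where
  "fsum xs = (\<lambda>w. int (count_list xs w))"

definition tensor_eq :: "('k \<Rightarrow> 'h::ab_group_add \<Rightarrow> 'h) \<Rightarrow> 'h list list \<Rightarrow> 'h list list \<Rightarrow> bool" where
  "tensor_eq smul xs ys \<longleftrightarrow> (\<lambda>w. fsum xs w - fsum ys w) \<in> tensor_rel smul"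

definition tens2 :: "('h \<times> 'h) list \<Rightarrow> 'h list list" where
  "tens2 ps = map (\<lambda>(x, y). [x, y]) ps"

definition dual_elem :: "('k::comm_ring_1 \<Rightarrow> 'h::ab_group_add \<Rightarrow> 'h) \<Rightarrow> ('h \<Rightarrow> 'k) \<Rightarrow> bool" where
  "dual_elem smul g \<longleftrightarrow> module_hom smul (*) g"

text \<open>H is finitely generated projective over k (dual basis formulation).\<close>
definition fg_projective :: "('k::comm_ring_1 \<Rightarrow> 'h::ab_group_add \<Rightarrow> 'h) \<Rightarrow> bool" where
  "fg_projective smul \<longleftrightarrow> (\<exists>es :: ('h \<times> ('h \<Rightarrow> 'k)) list.
      (\<forall>(e, \<phi>) \<in> set es. dual_elem smul \<phi>) \<and>
      (\<forall>a. a = sum_list (map (\<lambda>(e, \<phi>). smul (\<phi> a) e) es)))"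

text \<open>k-bialgebra structure on the ring 'h: multiplication and unit come from ring_1,
comultiplication Delta(a) = sum a1 (x) a2 is given by a list of pairs comult a,
counit eps.\<close>
definition bialgebra ::
  "('k::comm_ring_1 \<Rightarrow> 'h::ring_1 \<Rightarrow> 'h) \<Rightarrow> ('h \<Rightarrow> ('h \<times> 'h) list) \<Rightarrow> ('h \<Rightarrow> 'k) \<Rightarrow> bool" where
  "bialgebra smul comult eps \<longleftrightarrow>
     \<comment> \<open>k-algebra\<close>
     module smul \<and>
     (\<forall>c a b. smul c (a * b) = smul c a * b \<and> smul c (a * b) = a * smul c b) \<and>
     \<comment> \<open>comultiplication is k-linear\<close>
     (\<forall>a b. tensor_eq smul (tens2 (comult (a + b))) (tens2 (comult a) @ tens2 (comult b))) \<and>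
     (\<forall>c a. tensor_eq smul (tens2 (comult (smul c a)))
                            (map (\<lambda>(x, y). [smul c x, y]) (comult a))) \<and>
     \<comment> \<open>counit is k-linear\<close>
     dual_elem smul eps \<and>
     \<comment> \<open>coassociativity in H (x) H (x) H\<close>
     (\<forall>a. tensor_eq smul
            (concat (map (\<lambda>(x, y). map (\<lambda>(y1, y2). [x, y1, y2]) (comult y)) (comult a)))
            (concat (map (\<lambda>(x, y). map (\<lambda>(x1, x2). [x1, x2, y]) (comult x)) (comult a)))) \<and>
     \<comment> \<open>counit property\<close>
     (\<forall>a. sum_list (map (\<lambda>(x, y). smul (eps x) y) (comult a)) = a) \<and>
     (\<forall>a. sum_list (map (\<lambda>(x, y). smul (eps y) x) (comult a)) = a) \<and>
     \<comment> \<open>comultiplication and counit are algebra maps\<close>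
     (\<forall>a b. tensor_eq smul (tens2 (comult (a * b)))
              (concat (map (\<lambda>(x1, x2). map (\<lambda>(y1, y2). [x1 * y1, x2 * y2]) (comult b)) (comult a)))) \<and>
     tensor_eq smul (tens2 (comult 1)) [[1, 1]] \<and>
     (\<forall>a b. eps (a * b) = eps a * eps b) \<and>
     eps 1 = 1"

definition antipode ::
  "('k::comm_ring_1 \<Rightarrow> 'h::ring_1 \<Rightarrow> 'h) \<Rightarrow> ('h \<Rightarrow> ('h \<times> 'h) list) \<Rightarrow> ('h \<Rightarrow> 'k) \<Rightarrow> ('h \<Rightarrow> 'h) \<Rightarrow> bool" where
  "antipode smul comult eps S \<longleftrightarrow>
     module_hom smul smul S \<and>
     (\<forall>a. sum_list (map (\<lambda>(x, y). S x * y) (comult a)) = smul (eps a) 1) \<and>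
     (\<forall>a. sum_list (map (\<lambda>(x, y). x * S y) (comult a)) = smul (eps a) 1)"

definition conv :: "('h \<Rightarrow> ('h \<times> 'h) list) \<Rightarrow> ('h \<Rightarrow> 'k::comm_ring_1) \<Rightarrow> ('h \<Rightarrow> 'k) \<Rightarrow> ('h \<Rightarrow> 'k)" where
  "conv comult g h = (\<lambda>x. sum_list (map (\<lambda>(x1, x2). g x1 * h x2) (comult x)))"

definition frobenius_hom :: "('k::comm_ring_1 \<Rightarrow> 'h::ring_1 \<Rightarrow> 'h) \<Rightarrow> ('h \<Rightarrow> 'k) \<Rightarrow> bool" where
  "frobenius_hom smul f \<longleftrightarrow>
     fg_projective smul \<and> dual_elem smul f \<and>
     (\<exists>xys :: ('h \<times> 'h) list. \<forall>a.
        sum_list (map (\<lambda>(x, y). smul (f (y * a)) x) xys) = a \<and>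
        sum_list (map (\<lambda>(x, y). smul (f (a * x)) y) xys) = a)"

definition right_integral :: "('k::comm_ring_1 \<Rightarrow> 'h::ring_1 \<Rightarrow> 'h) \<Rightarrow> ('h \<Rightarrow> ('h \<times> 'h) list) \<Rightarrow> ('h \<Rightarrow> 'k) \<Rightarrow> bool" where
  "right_integral smul comult f \<longleftrightarrow>
     (\<forall>a. sum_list (map (\<lambda>(x, y). smul (f x) y) (comult a)) = smul (f a) 1)"

definition FH_algebra ::
  "('k::comm_ring_1 \<Rightarrow> 'h::ring_1 \<Rightarrow> 'h) \<Rightarrow> ('h \<Rightarrow> ('h \<times> 'h) list) \<Rightarrow> ('h \<Rightarrow> 'k) \<Rightarrow> ('h \<Rightarrow> 'k) \<Rightarrow> bool" where
  "FH_algebra smul comult eps f \<longleftrightarrow>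
     bialgebra smul comult eps \<and> frobenius_hom smul f \<and> right_integral smul comult f"

end

theory Submission
  imports Defs "HOL-Library.Multiset"
begin


definition balanced :: "('k \<Rightarrow> 'h::ab_group_add \<Rightarrow> 'h) \<Rightarrow> ('h list \<Rightarrow> 'a::ring_1) \<Rightarrow> bool" where
 "balanced smul F \<longleftrightarrow> (\<forall>u v x y. F (u@[x+y]@v) = F (u@[x]@v) + F (u@[y]@v)) \<and>
    (\<forall>u v c x y. F (u@[smul c x, y]@v) = F (u@[x, smul c y]@v))"

lemma delta_sum:
  assumes "finite B" "a \<in> B"
  shows "(\<Sum>w\<in>B. of_int (of_bool (w = a) :: int) * (F w :: 'a::ring_1)) = F a"
proof -
  have "(\<Sum>w\<in>B. of_int (of_bool (w = a) :: int) * F w) = (\<Sum>w\<in>B. if w = a then F w else 0)"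
    by (rule sum.cong) auto
  also have "\<dots> = F a" using assms by (simp add: sum.delta)
  finally show ?thesis .
qed

lemma rel_eval:
  assumes "p \<in> tensor_rel smul" "balanced smul F"
  shows "finite {w. p w \<noteq> 0} \<and> (\<forall>A. finite A \<longrightarrow> {w. p w \<noteq> 0} \<subseteq> A \<longrightarrow> (\<Sum>w\<in>A. of_int (p w) * F w) = 0)"
  using assms(1)
proof induction
  case zero
  then show ?case by simp
next
  case (add p q)
  have fp: "finite {w. p w \<noteq> 0}" and fq: "finite {w. q w \<noteq> 0}"
    and Hp: "\<And>A. finite A \<Longrightarrow> {w. p w \<noteq> 0} \<subseteq> A \<Longrightarrow> (\<Sum>w\<in>A. of_int (p w) * F w) = 0"
    and Hq: "\<And>A. finite A \<Longrightarrow> {w. q w \<noteq> 0} \<subseteq> A \<Longrightarrow> (\<Sum>w\<in>A. of_int (q w) * F w) = 0"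
    using add.IH by blast+
  have fin: "finite {w. p w + q w \<noteq> 0}"
    by (rule finite_subset[of _ "{w. p w \<noteq> 0} \<union> {w. q w \<noteq> 0}"]) (use fp fq in auto)
  show ?case
  proof (intro conjI allI impI fin)
    fix A :: "'a list set" assume A: "finite A" "{w. p w + q w \<noteq> 0} \<subseteq> A"
    let ?B = "A \<union> {w. p w \<noteq> 0} \<union> {w. q w \<noteq> 0}"
    have fB: "finite ?B" using A fp fq by simp
    have "(\<Sum>w\<in>A. of_int (p w + q w) * F w) = (\<Sum>w\<in>?B. of_int (p w + q w) * F w)"
    proof (rule sum.mono_neutral_left[OF fB])
      show "\<forall>i\<in>?B - A. of_int (p i + q i) * F i = 0"
      proof
        fix i assume "i \<in> ?B - A"
        then have "p i + q i = 0" using A(2) by blast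
        then show "of_int (p i + q i) * F i = 0" by simp
      qed
    qed auto
    also have "\<dots> = (\<Sum>w\<in>?B. of_int (p w) * F w) + (\<Sum>w\<in>?B. of_int (q w) * F w)"
      by (simp add: distrib_right sum.distrib)
    also have "\<dots> = 0" using Hp[of ?B] Hq[of ?B] fB by (simp add: subset_iff)
    finally show "(\<Sum>w\<in>A. of_int (p w + q w) * F w) = 0" .
  qed
next
  case (neg p)
  have fp: "finite {w. p w \<noteq> 0}"
    and Hp: "\<And>A. finite A \<Longrightarrow> {w. p w \<noteq> 0} \<subseteq> A \<Longrightarrow> (\<Sum>w\<in>A. of_int (p w) * F w) = 0"
    using neg.IH by blast+
  show ?case
  proof (intro conjI allI impI)
    show "finite {w. - p w \<noteq> 0}" using fp by simp
    fix A :: "'a list set" assume A: "finite A" "{w. - p w \<noteq> 0} \<subseteq> A"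
    then have "(\<Sum>w\<in>A. of_int (p w) * F w) = 0" using Hp by simp
    then show "(\<Sum>w\<in>A. of_int (- p w) * F w) = 0" by (simp add: sum_negf)
  qed
next
  case (additive u x y v)
  let ?P = "\<lambda>w. of_bool (w = u @ [x + y] @ v) - of_bool (w = u @ [x] @ v) - of_bool (w = u @ [y] @ v) :: int"
  have sub: "{w. ?P w \<noteq> 0} \<subseteq> {u @ [x + y] @ v, u @ [x] @ v, u @ [y] @ v}" by auto
  show ?case
  proof (intro conjI allI impI)
    show "finite {w. ?P w \<noteq> 0}" using sub finite_subset by blast
    fix A :: "'a list set" assume A: "finite A" "{w. ?P w \<noteq> 0} \<subseteq> A"
    let ?B = "A \<union> {u @ [x + y] @ v, u @ [x] @ v, u @ [y] @ v}"
    have fB: "finite ?B" using A by simp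
    have "(\<Sum>w\<in>A. of_int (?P w) * F w) = (\<Sum>w\<in>?B. of_int (?P w) * F w)"
    proof (rule sum.mono_neutral_left[OF fB])
      show "\<forall>i\<in>?B - A. of_int (?P i) * F i = 0"
      proof
        fix i assume "i \<in> ?B - A"
        then have "?P i = 0" using A(2) by blast
        then show "of_int (?P i) * F i = 0" by (simp only: of_int_0 mult_zero_left)
      qed
    qed auto
    also have "\<dots> = (\<Sum>w\<in>?B. of_int (of_bool (w = u @ [x + y] @ v) :: int) * F w) - (\<Sum>w\<in>?B. of_int (of_bool (w = u @ [x] @ v) :: int) * F w)
       - (\<Sum>w\<in>?B. of_int (of_bool (w = u @ [y] @ v) :: int) * F w)"
      by (simp only: of_int_diff left_diff_distrib sum_subtractf)
    also have "\<dots> = F (u @ [x + y] @ v) - F (u @ [x] @ v) - F (u @ [y] @ v)"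
      by (simp only: delta_sum[OF fB] insert_iff Un_iff simp_thms)
    also have "\<dots> = 0" using assms(2) unfolding balanced_def by simp
    finally show "(\<Sum>w\<in>A. of_int (?P w) * F w) = 0" .
  qed
next
  case (scalar u c x y v)
  let ?P = "\<lambda>w. of_bool (w = u @ [smul c x, y] @ v) - of_bool (w = u @ [x, smul c y] @ v) :: int"
  have sub: "{w. ?P w \<noteq> 0} \<subseteq> {u @ [smul c x, y] @ v, u @ [x, smul c y] @ v}" by auto
  show ?case
  proof (intro conjI allI impI)
    show "finite {w. ?P w \<noteq> 0}" using sub finite_subset by blast
    fix A :: "'a list set" assume A: "finite A" "{w. ?P w \<noteq> 0} \<subseteq> A"
    let ?B = "A \<union> {u @ [smul c x, y] @ v, u @ [x, smul c y] @ v}"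
    have fB: "finite ?B" using A by simp
    have "(\<Sum>w\<in>A. of_int (?P w) * F w) = (\<Sum>w\<in>?B. of_int (?P w) * F w)"
    proof (rule sum.mono_neutral_left[OF fB])
      show "\<forall>i\<in>?B - A. of_int (?P i) * F i = 0"
      proof
        fix i assume "i \<in> ?B - A"
        then have "?P i = 0" using A(2) by blast
        then show "of_int (?P i) * F i = 0" by (simp only: of_int_0 mult_zero_left)
      qed
    qed auto
    also have "\<dots> = (\<Sum>w\<in>?B. of_int (of_bool (w = u @ [smul c x, y] @ v) :: int) * F w) - (\<Sum>w\<in>?B. of_int (of_bool (w = u @ [x, smul c y] @ v) :: int) * F w)"
      by (simp only: of_int_diff left_diff_distrib sum_subtractf)
    also have "\<dots> = F (u @ [smul c x, y] @ v) - F (u @ [x, smul c y] @ v)"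
      by (simp only: delta_sum[OF fB] insert_iff Un_iff simp_thms)
    also have "\<dots> = 0" using assms(2) unfolding balanced_def by simp
    finally show "(\<Sum>w\<in>A. of_int (?P w) * F w) = 0" .
  qed
qed

lemma fsum_Cons: "fsum (x # xs) = (\<lambda>w. fsum xs w + of_bool (w = x))"
  by (auto simp: fsum_def)

lemma sum_list_fsum:
  assumes "finite A" "set xs \<subseteq> A"
  shows "sum_list (map F xs) = (\<Sum>w\<in>A. of_int (fsum xs w) * (F w :: 'a::ring_1))"
  using assms(2)
proof (induction xs)
  case Nil
  then show ?case by (simp add: fsum_def)
next
  case (Cons x xs)
  have "(\<Sum>w\<in>A. of_int (fsum (x#xs) w) * F w) = (\<Sum>w\<in>A. of_int (fsum xs w) * F w) + (\<Sum>w\<in>A. of_bool (w = x) * F w)"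
    by (simp add: fsum_Cons distrib_right sum.distrib)
  also have "(\<Sum>w\<in>A. of_bool (w = x) * F w) = (\<Sum>w\<in>A. if w = x then F w else 0)"
    by (rule sum.cong) auto
  also have "\<dots> = F x"
    using Cons.prems assms(1) by (simp add: sum.delta)
  finally show ?case using Cons by simp
qed

lemma tensor_eq_eval:
  assumes "tensor_eq smul xs ys" "balanced smul F"
  shows "sum_list (map F xs) = sum_list (map F ys)"
proof -
  let ?p = "\<lambda>w. fsum xs w - fsum ys w"
  have r: "?p \<in> tensor_rel smul" using assms(1) by (simp add: tensor_eq_def)
  let ?A = "set xs \<union> set ys"
  have "{w. ?p w \<noteq> 0} \<subseteq> ?A" by (auto simp: fsum_def count_list_0_iff)
  then have "(\<Sum>w\<in>?A. of_int (?p w) * F w) = 0" using rel_eval[OF r assms(2)] by auto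
  then show ?thesis
    by (simp add: sum_list_fsum[of ?A] left_diff_distrib sum_subtractf)
qed



lemma te_refl: "tensor_eq smul xs xs"
  unfolding tensor_eq_def using tensor_rel.zero by simp

lemma te_sym: "tensor_eq smul xs ys \<Longrightarrow> tensor_eq smul ys xs"
  unfolding tensor_eq_def by (drule tensor_rel.neg) simp

lemma te_trans: "tensor_eq smul xs ys \<Longrightarrow> tensor_eq smul ys zs \<Longrightarrow> tensor_eq smul xs zs"
  unfolding tensor_eq_def by (drule (1) tensor_rel.add) simp

lemmas te_trans' [trans] = te_trans

lemma fsum_append: "fsum (xs @ ys) w = fsum xs w + fsum ys w"
  by (simp add: fsum_def)

lemma te_append: "tensor_eq smul xs ys \<Longrightarrow> tensor_eq smul zs ws \<Longrightarrow> tensor_eq smul (xs @ zs) (ys @ ws)"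
  unfolding tensor_eq_def by (drule (1) tensor_rel.add) (simp add: fsum_append algebra_simps)

lemma te_mset: "mset xs = mset ys \<Longrightarrow> tensor_eq smul xs ys"
proof -
  assume "mset xs = mset ys"
  then have "fsum xs = fsum ys" unfolding fsum_def by (simp flip: count_mset)
  then show ?thesis using te_refl[of smul xs] by (simp add: tensor_eq_def)
qed

lemma te_cancel: "tensor_eq smul (xs @ zs) (ys @ zs) \<Longrightarrow> tensor_eq smul xs ys"
  unfolding tensor_eq_def by (simp add: fsum_append)

lemma te_additive: "tensor_eq smul [u @ [x + y] @ v] [u @ [x] @ v, u @ [y] @ v]"
proof -
  have "(\<lambda>w. fsum [u @ [x + y] @ v] w - fsum [u @ [x] @ v, u @ [y] @ v] w) =
     (\<lambda>w. of_bool (w = u @ [x + y] @ v) - of_bool (w = u @ [x] @ v) - of_bool (w = u @ [y] @ v))"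
    by (rule ext) (simp add: fsum_def)
  then show ?thesis unfolding tensor_eq_def by (simp only:) (rule tensor_rel.additive)
qed

lemma te_scalar: "tensor_eq smul [u @ [smul c x, y] @ v] [u @ [x, smul c y] @ v]"
proof -
  have "(\<lambda>w. fsum [u @ [smul c x, y] @ v] w - fsum [u @ [x, smul c y] @ v] w) =
     (\<lambda>w. of_bool (w = u @ [smul c x, y] @ v) - of_bool (w = u @ [x, smul c y] @ v))"
    by (rule ext) (simp add: fsum_def)
  then show ?thesis unfolding tensor_eq_def by (simp only:) (rule tensor_rel.scalar)
qed

lemma te_concat: "(\<And>i. i \<in> set I \<Longrightarrow> tensor_eq smul (A i) (B i)) \<Longrightarrow>
   tensor_eq smul (concat (map A I)) (concat (map B I))"
  by (induction I) (auto intro: te_append te_refl)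

lemma te_zero: "tensor_eq smul [u @ [0] @ v] []"
proof -
  have "tensor_eq smul ([] @ [u @ [0] @ v]) ([u @ [0] @ v] @ [u @ [0] @ v])"
    using te_additive[of smul u 0 0 v] by simp
  then have "tensor_eq smul [] [u @ [0] @ v]" by (rule te_cancel)
  then show ?thesis by (rule te_sym)
qed

lemma te_sum: "tensor_eq smul [u @ [sum_list xs] @ v] (map (\<lambda>x. u @ [x] @ v) xs)"
proof (induction xs)
  case Nil
  then show ?case using te_zero by simp
next
  case (Cons x xs)
  have "tensor_eq smul [u @ [x + sum_list xs] @ v] ([u @ [x] @ v] @ [u @ [sum_list xs] @ v])"
    using te_additive by simp
  also have "tensor_eq smul ([u @ [x] @ v] @ [u @ [sum_list xs] @ v]) ([u @ [x] @ v] @ map (\<lambda>x. u @ [x] @ v) xs)"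
    by (rule te_append[OF te_refl Cons.IH])
  finally show ?case by simp
qed


lemma mset_concat_cons:
  "mset (concat (map (\<lambda>i. h i # F i) I)) = mset (map h I) + mset (concat (map F I))"
  by (induction I) (simp_all add: ac_simps)

lemma mset_concat_swap:
  "mset (concat (map (\<lambda>p. map (\<lambda>i. g p i) I) P)) = mset (concat (map (\<lambda>i. map (\<lambda>p. g p i) P) I))"
proof (induction P)
  case Nil
  then show ?case by (induction I) auto
next
  case (Cons p P)
  have "mset (concat (map (\<lambda>i. map (\<lambda>p. g p i) (p # P)) I)) =
        mset (map (g p) I) + mset (concat (map (\<lambda>i. map (\<lambda>p. g p i) P) I))"
    using mset_concat_cons[of "g p" "\<lambda>i. map (\<lambda>p. g p i) P" I] by simp
  moreover have "mset (concat (map (\<lambda>p. map (\<lambda>i. g p i) I) (p # P))) =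
     mset (map (g p) I) + mset (concat (map (\<lambda>p. map (\<lambda>i. g p i) I) P))" by simp
  ultimately show ?case using Cons.IH by simp
qed

definition F2 :: "('h \<Rightarrow> 'h \<Rightarrow> 'a::ring_1) \<Rightarrow> 'h list \<Rightarrow> 'a" where
  "F2 G w = (if length w = 2 then G (w!0) (w!1) else 0)"

definition F3 :: "('h \<Rightarrow> 'h \<Rightarrow> 'h \<Rightarrow> 'a::ring_1) \<Rightarrow> 'h list \<Rightarrow> 'a" where
  "F3 G w = (if length w = 3 then G (w!0) (w!1) (w!2) else 0)"

lemma balanced_F2:
  assumes "\<And>x x' y. G (x + x') y = G x y + G x' y" "\<And>x y y'. G x (y + y') = G x y + G x y'"
    "\<And>c x y. G (smul c x) y = G x (smul c y)"
  shows "balanced smul (F2 G)"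
  unfolding balanced_def
proof (intro conjI allI)
  fix u v x y
  show "F2 G (u @ [x + y] @ v) = F2 G (u @ [x] @ v) + F2 G (u @ [y] @ v)"
  proof (cases "length u + length v = 1")
    case True
    then have "length u = 0 \<or> length u = 1" by arith
    then show ?thesis using True by (auto simp: F2_def nth_append assms)
  qed (auto simp: F2_def)
next
  fix u v c x y
  show "F2 G (u @ [smul c x, y] @ v) = F2 G (u @ [x, smul c y] @ v)"
  proof (cases "length u + length v = 0")
    case True
    then show ?thesis by (auto simp: F2_def nth_append assms)
  qed (auto simp: F2_def)
qed

lemma balanced_F3:
  assumes "\<And>x x' y z. G (x + x') y z = G x y z + G x' y z" "\<And>x y y' z. G x (y + y') z = G x y z + G x y' z"
    "\<And>x y z z'. G x y (z + z') = G x y z + G x y z'"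
    "\<And>c x y z. G (smul c x) y z = G x (smul c y) z" "\<And>c x y z. G x (smul c y) z = G x y (smul c z)"
  shows "balanced smul (F3 G)"
  unfolding balanced_def
proof (intro conjI allI)
  fix u v x y
  show "F3 G (u @ [x + y] @ v) = F3 G (u @ [x] @ v) + F3 G (u @ [y] @ v)"
  proof (cases "length u + length v = 2")
    case True
    then have "length u = 0 \<or> length u = 1 \<or> length u = 2" by arith
    then show ?thesis using True by (auto simp: F3_def nth_append assms)
  qed (auto simp: F3_def)
next
  fix u v c x y
  show "F3 G (u @ [smul c x, y] @ v) = F3 G (u @ [x, smul c y] @ v)"
  proof (cases "length u + length v = 1")
    case True
    then have "length u = 0 \<or> length u = 1" by arith
    then show ?thesis using True by (auto simp: F3_def nth_append assms)
  qed (auto simp: F3_def)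
qed




lemma te_map: "(\<And>i. i \<in> set I \<Longrightarrow> tensor_eq smul [A i] [B i]) \<Longrightarrow> tensor_eq smul (map A I) (map B I)"
proof (induction I)
  case Nil
  then show ?case by (simp add: te_refl)
next
  case (Cons a I)
  then show ?case using te_append[of smul "[A a]" "[B a]" "map A I" "map B I"] by simp
qed

lemma te_scalar0: "tensor_eq smul [[smul c x, y]] [[x, smul c y]]"
  using te_scalar[of smul "[]" c x y "[]"] by simp

lemma map_as_concat: "map g I = concat (map (\<lambda>i. [g i]) I)"
  by (induction I) auto

lemma sep2:
  assumes frob: "\<And>a. a = sum_list (map (\<lambda>(x, y). smul (\<psi> x a) y) xys)"
  shows "tensor_eq smul (tens2 P)
     (map (\<lambda>(x, y). [sum_list (map (\<lambda>(p, q). smul (\<psi> x q) p) P), y]) xys)"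
proof -
  let ?g = "\<lambda>(p, q) (x, y). [smul (\<psi> x q) p, y]"
  have step1: "tensor_eq smul [[p, q]] (map (?g (p, q)) xys)" for p q
  proof -
    have "[[p, q]] = [[p] @ [sum_list (map (\<lambda>(x, y). smul (\<psi> x q) y) xys)] @ []]"
      using frob[of q] by simp
    also have "tensor_eq smul \<dots> (map (\<lambda>z. [p] @ [z] @ []) (map (\<lambda>(x, y). smul (\<psi> x q) y) xys))"
      by (rule te_sum)
    also have "map (\<lambda>z. [p] @ [z] @ []) (map (\<lambda>(x, y). smul (\<psi> x q) y) xys) =
        map (\<lambda>(x, y). [] @ [p, smul (\<psi> x q) y] @ []) xys"
      by (induction xys) auto
    also have "tensor_eq smul \<dots> (map (\<lambda>(x, y). [] @ [smul (\<psi> x q) p, y] @ []) xys)"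
      by (rule te_map) (auto intro: te_sym te_scalar0)
    also have "map (\<lambda>(x, y). [] @ [smul (\<psi> x q) p, y] @ []) xys = map (?g (p, q)) xys"
      by (induction xys) auto
    finally show ?thesis .
  qed
  have "tens2 P = concat (map (\<lambda>pq. [case pq of (p, q) \<Rightarrow> [p, q]]) P)"
    unfolding tens2_def by (rule map_as_concat)
  also have "tensor_eq smul \<dots> (concat (map (\<lambda>pq. map (\<lambda>i. ?g pq i) xys) P))"
  proof (rule te_concat)
    fix pq assume "pq \<in> set P"
    obtain p q where pq: "pq = (p, q)" by (cases pq)
    show "tensor_eq smul [case pq of (p, q) \<Rightarrow> [p, q]] (map (?g pq) xys)"
      using step1[of p q] unfolding pq by simp
  qed
  also have "tensor_eq smul \<dots> (concat (map (\<lambda>i. map (\<lambda>pq. ?g pq i) P) xys))"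
    by (rule te_mset) (rule mset_concat_swap)
  also have "tensor_eq smul \<dots> (concat (map (\<lambda>i. [case i of (x, y) \<Rightarrow> [sum_list (map (\<lambda>(p, q). smul (\<psi> x q) p) P), y]]) xys))"
  proof (rule te_concat)
    fix i assume "i \<in> set xys"
    obtain x y where i: "i = (x, y)" by (cases i)
    have "tensor_eq smul [[] @ [sum_list (map (\<lambda>(p, q). smul (\<psi> x q) p) P)] @ [y]]
        (map (\<lambda>z. [] @ [z] @ [y]) (map (\<lambda>(p, q). smul (\<psi> x q) p) P))"
      by (rule te_sum)
    moreover have "map (\<lambda>z. [] @ [z] @ [y]) (map (\<lambda>(p, q). smul (\<psi> x q) p) P) = map (\<lambda>pq. ?g pq i) P"
      unfolding i by (induction P) auto
    moreover have "[[] @ [sum_list (map (\<lambda>(p, q). smul (\<psi> x q) p) P)] @ [y]] = [case i of (x, y) \<Rightarrow> [sum_list (map (\<lambda>(p, q). smul (\<psi> x q) p) P), y]]"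
      unfolding i by simp
    ultimately show "tensor_eq smul (map (\<lambda>pq. ?g pq i) P)
       [case i of (x, y) \<Rightarrow> [sum_list (map (\<lambda>(p, q). smul (\<psi> x q) p) P), y]]"
      by (metis te_sym)
  qed
  also have "concat (map (\<lambda>i. [case i of (x, y) \<Rightarrow> [sum_list (map (\<lambda>(p, q). smul (\<psi> x q) p) P), y]]) xys)
     = map (\<lambda>(x, y). [sum_list (map (\<lambda>(p, q). smul (\<psi> x q) p) P), y]) xys"
    by (rule map_as_concat[symmetric])
  finally show ?thesis .
qed

lemma sep1:
  assumes db: "\<And>a. a = sum_list (map (\<lambda>(x, y). smul (\<psi> y a) x) es)"
  shows "tensor_eq smul (tens2 P)
     (map (\<lambda>(x, y). [x, sum_list (map (\<lambda>(p, q). smul (\<psi> y p) q) P)]) es)"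
proof -
  let ?g = "\<lambda>(p, q) (x, y). [x, smul (\<psi> y p) q]"
  have step1: "tensor_eq smul [[p, q]] (map (?g (p, q)) es)" for p q
  proof -
    have "[[p, q]] = [[] @ [sum_list (map (\<lambda>(x, y). smul (\<psi> y p) x) es)] @ [q]]"
      using db[of p] by simp
    also have "tensor_eq smul \<dots> (map (\<lambda>z. [] @ [z] @ [q]) (map (\<lambda>(x, y). smul (\<psi> y p) x) es))"
      by (rule te_sum)
    also have "map (\<lambda>z. [] @ [z] @ [q]) (map (\<lambda>(x, y). smul (\<psi> y p) x) es) =
        map (\<lambda>(x, y). [] @ [smul (\<psi> y p) x, q] @ []) es"
      by (induction es) auto
    also have "tensor_eq smul \<dots> (map (\<lambda>(x, y). [] @ [x, smul (\<psi> y p) q] @ []) es)"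
      by (rule te_map) (auto intro: te_scalar0)
    also have "map (\<lambda>(x, y). [] @ [x, smul (\<psi> y p) q] @ []) es = map (?g (p, q)) es"
      by (induction es) auto
    finally show ?thesis .
  qed
  have "tens2 P = concat (map (\<lambda>pq. [case pq of (p, q) \<Rightarrow> [p, q]]) P)"
    unfolding tens2_def by (rule map_as_concat)
  also have "tensor_eq smul \<dots> (concat (map (\<lambda>pq. map (\<lambda>i. ?g pq i) es) P))"
  proof (rule te_concat)
    fix pq assume "pq \<in> set P"
    obtain p q where pq: "pq = (p, q)" by (cases pq)
    show "tensor_eq smul [case pq of (p, q) \<Rightarrow> [p, q]] (map (?g pq) es)"
      using step1[of p q] unfolding pq by simp
  qed
  also have "tensor_eq smul \<dots> (concat (map (\<lambda>i. map (\<lambda>pq. ?g pq i) P) es))"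
    by (rule te_mset) (rule mset_concat_swap)
  also have "tensor_eq smul \<dots> (concat (map (\<lambda>i. [case i of (x, y) \<Rightarrow> [x, sum_list (map (\<lambda>(p, q). smul (\<psi> y p) q) P)]]) es))"
  proof (rule te_concat)
    fix i assume "i \<in> set es"
    obtain x y where i: "i = (x, y)" by (cases i)
    have "tensor_eq smul [[x] @ [sum_list (map (\<lambda>(p, q). smul (\<psi> y p) q) P)] @ []]
        (map (\<lambda>z. [x] @ [z] @ []) (map (\<lambda>(p, q). smul (\<psi> y p) q) P))"
      by (rule te_sum)
    moreover have "map (\<lambda>z. [x] @ [z] @ []) (map (\<lambda>(p, q). smul (\<psi> y p) q) P) = map (\<lambda>pq. ?g pq i) P"
      unfolding i by (induction P) auto
    moreover have "[[x] @ [sum_list (map (\<lambda>(p, q). smul (\<psi> y p) q) P)] @ []] = [case i of (x, y) \<Rightarrow> [x, sum_list (map (\<lambda>(p, q). smul (\<psi> y p) q) P)]]"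
      unfolding i by simp
    ultimately show "tensor_eq smul (map (\<lambda>pq. ?g pq i) P)
       [case i of (x, y) \<Rightarrow> [x, sum_list (map (\<lambda>(p, q). smul (\<psi> y p) q) P)]]"
      by (metis te_sym)
  qed
  also have "concat (map (\<lambda>i. [case i of (x, y) \<Rightarrow> [x, sum_list (map (\<lambda>(p, q). smul (\<psi> y p) q) P)]]) es)
     = map (\<lambda>(x, y). [x, sum_list (map (\<lambda>(p, q). smul (\<psi> y p) q) P)]) es"
    by (rule map_as_concat[symmetric])
  finally show ?thesis .
qed

lemma sum_F2_tens2: "sum_list (map (F2 G) (tens2 P)) = sum_list (map (\<lambda>(x, y). G x y) P)"
  by (induction P) (auto simp: tens2_def F2_def)




definition bil :: "('k \<Rightarrow> 'h::ab_group_add \<Rightarrow> 'h) \<Rightarrow> ('h \<Rightarrow> 'h \<Rightarrow> 'a::ring_1) \<Rightarrow> bool" where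
  "bil smul G \<longleftrightarrow> (\<forall>x x' y. G (x + x') y = G x y + G x' y) \<and> (\<forall>x y y'. G x (y + y') = G x y + G x y') \<and>
     (\<forall>c x y. G (smul c x) y = G x (smul c y))"

definition tri :: "('k \<Rightarrow> 'h::ab_group_add \<Rightarrow> 'h) \<Rightarrow> ('h \<Rightarrow> 'h \<Rightarrow> 'h \<Rightarrow> 'a::ring_1) \<Rightarrow> bool" where
  "tri smul H \<longleftrightarrow> (\<forall>x x' y z. H (x + x') y z = H x y z + H x' y z) \<and> (\<forall>x y y' z. H x (y + y') z = H x y z + H x y' z) \<and>
    (\<forall>x y z z'. H x y (z + z') = H x y z + H x y z') \<and>
    (\<forall>c x y z. H (smul c x) y z = H x (smul c y) z) \<and> (\<forall>c x y z. H x (smul c y) z = H x y (smul c z))"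

lemma bil_balanced: "bil smul G \<Longrightarrow> balanced smul (F2 G)"
  unfolding bil_def by (rule balanced_F2) auto

lemma tri_balanced: "tri smul H \<Longrightarrow> balanced smul (F3 H)"
  unfolding tri_def by (rule balanced_F3) auto

lemma sum_list_concat_map: "sum_list (map F (concat xss)) = sum_list (map (\<lambda>xs. sum_list (map F xs)) xss)"
  by (induction xss) auto

lemma sum_list_swap:
  "(\<Sum>a\<leftarrow>A. \<Sum>b\<leftarrow>B. h a b) = (\<Sum>b\<leftarrow>B. \<Sum>a\<leftarrow>A. (h a b :: 'a::comm_monoid_add))"
  by (induction A) (auto simp: sum_list_addf)

lemma dual_add: "dual_elem smul g \<Longrightarrow> g (x + y) = g x + g y"
  by (simp add: dual_elem_def module_hom_def module_hom_axioms_def)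

lemma dual_scale: "dual_elem smul g \<Longrightarrow> g (smul c x) = c * g x"
  by (simp add: dual_elem_def module_hom_def module_hom_axioms_def)

lemma dual_zero: "dual_elem smul g \<Longrightarrow> g 0 = 0"
  using dual_add[of smul g 0 0] by simp

lemma dual_sum: "dual_elem smul g \<Longrightarrow> g (sum_list (map h xs)) = sum_list (map (\<lambda>x. g (h x)) xs)"
  by (induction xs) (auto simp: dual_add dual_zero)

lemma hom_add: "module_hom smul smul S \<Longrightarrow> S (x + y) = S x + S y"
  by (simp add: module_hom_def module_hom_axioms_def)

lemma hom_scale: "module_hom smul smul S \<Longrightarrow> S (smul c x) = smul c (S x)"
  by (simp add: module_hom_def module_hom_axioms_def)

lemma hom_zero: "module_hom smul smul S \<Longrightarrow> S 0 = 0"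
  using hom_add[of smul S 0 0] by simp

lemma hom_sum: "module_hom smul smul S \<Longrightarrow> S (sum_list (map h xs)) = sum_list (map (\<lambda>x. S (h x)) xs)"
  by (induction xs) (auto simp: hom_add hom_zero)

lemma module_mult: "module ((*) :: 'k::comm_ring_1 \<Rightarrow> 'k \<Rightarrow> 'k)"
  by unfold_locales (auto simp: algebra_simps)


lemma sum2_mult_left: "(a::'a::ring_1) * (\<Sum>(x, y)\<leftarrow>P. h x y) = (\<Sum>(x, y)\<leftarrow>P. a * h x y)"
  by (induction P) (auto simp: algebra_simps)
lemma sum2_mult_right: "(\<Sum>(x, y)\<leftarrow>P. h x y) * (a::'a::ring_1) = (\<Sum>(x, y)\<leftarrow>P. h x y * a)"
  by (induction P) (auto simp: algebra_simps)
lemma dual_sum2: "dual_elem smul g \<Longrightarrow> g (\<Sum>(x, y)\<leftarrow>P. h x y) = (\<Sum>(x, y)\<leftarrow>P. g (h x y))"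
  by (induction P) (auto simp: dual_add dual_zero)
lemma hom_sum2: "module_hom smul smul S \<Longrightarrow> S (\<Sum>(x, y)\<leftarrow>P. h x y) = (\<Sum>(x, y)\<leftarrow>P. S (h x y))"
  by (induction P) (auto simp: hom_add hom_zero)
lemma sum2_cong: "(\<And>x y. (x, y) \<in> set P \<Longrightarrow> h x y = h' x y) \<Longrightarrow> (\<Sum>(x, y)\<leftarrow>P. h x y) = (\<Sum>(x, y)\<leftarrow>P. h' x y)"
  by (rule arg_cong[where f = sum_list], rule map_cong) auto


lemma sum2_swap: "(\<Sum>(p, q)\<leftarrow>A. \<Sum>(x, y)\<leftarrow>B. h p q x y) = (\<Sum>(x, y)\<leftarrow>B. \<Sum>(p, q)\<leftarrow>A. (h p q x y :: 'a::comm_monoid_add))"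
  by (induction A) (auto simp: sum_list_addf case_prod_beta)
lemma sum_map_swap: "(\<Sum>(p, q)\<leftarrow>map (\<lambda>(x, y). (y, x)) P. h p q) = (\<Sum>(x, y)\<leftarrow>P. h y x)"
  by (induction P) auto
lemma sum_map_fst: "(\<Sum>(p, q)\<leftarrow>map (\<lambda>(x, y). (k x, y)) P. h p q) = (\<Sum>(x, y)\<leftarrow>P. h (k x) y)"
  by (induction P) auto

locale fh =
  fixes smul :: "'k::comm_ring_1 \<Rightarrow> 'h::ring_1 \<Rightarrow> 'h"
    and comult :: "'h \<Rightarrow> ('h \<times> 'h) list"
    and eps :: "'h \<Rightarrow> 'k" and f :: "'h \<Rightarrow> 'k"
    and S :: "'h \<Rightarrow> 'h" and t b :: 'h
  assumes FH: "FH_algebra smul comult eps f"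
    and Santi: "antipode smul comult eps S"
    and norm: "\<forall>x. f (t * x) = eps x"
    and distinguished: "\<forall>g. dual_elem smul g \<longrightarrow> conv comult g f = (\<lambda>x. g b * f x)"
begin

lemma bialg: "bialgebra smul comult eps" using FH by (simp add: FH_algebra_def)

lemma mod: "module smul" using bialg by (simp add: bialgebra_def)

sublocale M: module smul by (rule mod)

lemma sm1: "smul c (a * b') = smul c a * b'" using bialg unfolding bialgebra_def by blast
lemma sm2: "smul c (a * b') = a * smul c b'" using bialg unfolding bialgebra_def by blast

lemma cm_add_te: "tensor_eq smul (tens2 (comult (a + b'))) (tens2 (comult a) @ tens2 (comult b'))"
  using bialg by (simp add: bialgebra_def)
lemma cm_smul_te: "tensor_eq smul (tens2 (comult (smul c a))) (map (\<lambda>(x, y). [smul c x, y]) (comult a))"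
  using bialg by (simp add: bialgebra_def)
lemma dual_eps: "dual_elem smul eps"
  using bialg by (simp add: bialgebra_def)
lemma coassoc_te: "tensor_eq smul
            (concat (map (\<lambda>(x, y). map (\<lambda>(y1, y2). [x, y1, y2]) (comult y)) (comult a)))
            (concat (map (\<lambda>(x, y). map (\<lambda>(x1, x2). [x1, x2, y]) (comult x)) (comult a)))"
  using bialg by (simp add: bialgebra_def)
lemma counitL: "(\<Sum>(x, y)\<leftarrow>comult a. smul (eps x) y) = a"
  using bialg by (simp add: bialgebra_def)
lemma counitR: "(\<Sum>(x, y)\<leftarrow>comult a. smul (eps y) x) = a"
  using bialg by (simp add: bialgebra_def)
lemma mult_te: "tensor_eq smul (tens2 (comult (a * b')))
              (concat (map (\<lambda>(x1, x2). map (\<lambda>(y1, y2). [x1 * y1, x2 * y2]) (comult b')) (comult a)))"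
  using bialg by (simp add: bialgebra_def)
lemma eps_mult: "eps (a * b') = eps a * eps b'"
  using bialg by (simp add: bialgebra_def)
lemma eps_one: "eps 1 = 1"
  using bialg by (simp add: bialgebra_def)

lemma frob: "frobenius_hom smul f" using FH by (simp add: FH_algebra_def)
lemma dual_f: "dual_elem smul f" using frob by (simp add: frobenius_hom_def)
lemma rint: "(\<Sum>(x, y)\<leftarrow>comult a. smul (f x) y) = smul (f a) 1"
  using FH by (simp add: FH_algebra_def right_integral_def)

lemma S_hom: "module_hom smul smul S" using Santi by (simp add: antipode_def)
lemma antiL: "(\<Sum>(x, y)\<leftarrow>comult a. S x * y) = smul (eps a) 1"
  using Santi by (simp add: antipode_def)
lemma antiR: "(\<Sum>(x, y)\<leftarrow>comult a. x * S y) = smul (eps a) 1"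
  using Santi by (simp add: antipode_def)

lemma sum_F2_map: "sum_list (map (F2 G) (map (\<lambda>(x, y). [h x, y]) P)) = (\<Sum>(x, y)\<leftarrow>P. G (h x) y)"
  by (induction P) (auto simp: F2_def)

lemma L_add: "bil smul G \<Longrightarrow>
  (\<Sum>(x, y)\<leftarrow>comult (a + b'). G x y) = (\<Sum>(x, y)\<leftarrow>comult a. G x y) + (\<Sum>(x, y)\<leftarrow>comult b'. G x y)"
  using tensor_eq_eval[OF cm_add_te bil_balanced] by (simp add: sum_F2_tens2)

lemma ev3a: "sum_list (map (F3 H) (map (\<lambda>(y1, y2). [x, y1, y2]) Q)) = (\<Sum>(y1, y2)\<leftarrow>Q. H x y1 y2)"
  by (induction Q) (auto simp: F3_def)
lemma ev3b: "sum_list (map (F3 H) (map (\<lambda>(x1, x2). [x1, x2, y]) Q)) = (\<Sum>(x1, x2)\<leftarrow>Q. H x1 x2 y)"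
  by (induction Q) (auto simp: F3_def)
lemma ev2m: "sum_list (map (F2 G) (map (\<lambda>(y1, y2). [x1 * y1, x2 * y2]) Q)) = (\<Sum>(y1, y2)\<leftarrow>Q. G (x1 * y1) (x2 * y2))"
  by (induction Q) (auto simp: F2_def)
lemma ev_concat: "sum_list (map F (concat (map g P))) = (\<Sum>p\<leftarrow>P. sum_list (map F (g p)))"
  by (induction P) auto

lemma L_smul: assumes "bil smul G" shows
  "(\<Sum>(x, y)\<leftarrow>comult (smul c a). G x y) = (\<Sum>(x, y)\<leftarrow>comult a. G (smul c x) y)"
proof -
  have "(\<Sum>(x, y)\<leftarrow>comult (smul c a). G x y) = sum_list (map (F2 G) (tens2 (comult (smul c a))))"
    by (simp add: sum_F2_tens2)
  also have "\<dots> = sum_list (map (F2 G) (map (\<lambda>(x, y). [smul c x, y]) (comult a)))"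
    by (rule tensor_eq_eval[OF cm_smul_te bil_balanced[OF assms]])
  also have "\<dots> = (\<Sum>(x, y)\<leftarrow>comult a. G (smul c x) y)" by (rule sum_F2_map)
  finally show ?thesis .
qed

lemma L_coassoc: assumes "tri smul H" shows
  "(\<Sum>(x, y)\<leftarrow>comult a. \<Sum>(y1, y2)\<leftarrow>comult y. H x y1 y2) = (\<Sum>(x, y)\<leftarrow>comult a. \<Sum>(x1, x2)\<leftarrow>comult x. H x1 x2 y)"
proof -
  have "(\<Sum>(x, y)\<leftarrow>comult a. \<Sum>(y1, y2)\<leftarrow>comult y. H x y1 y2) =
     sum_list (map (F3 H) (concat (map (\<lambda>(x, y). map (\<lambda>(y1, y2). [x, y1, y2]) (comult y)) (comult a))))"
    unfolding ev_concat by (rule arg_cong[where f = sum_list], rule map_cong) (auto simp del: map_map simp add: ev3a)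
  also have "\<dots> = sum_list (map (F3 H) (concat (map (\<lambda>(x, y). map (\<lambda>(x1, x2). [x1, x2, y]) (comult x)) (comult a))))"
    by (rule tensor_eq_eval[OF coassoc_te tri_balanced[OF assms]])
  also have "\<dots> = (\<Sum>(x, y)\<leftarrow>comult a. \<Sum>(x1, x2)\<leftarrow>comult x. H x1 x2 y)"
    unfolding ev_concat by (rule arg_cong[where f = sum_list], rule map_cong) (auto simp del: map_map simp add: ev3b)
  finally show ?thesis .
qed

lemma L_mult: assumes "bil smul G" shows
  "(\<Sum>(x, y)\<leftarrow>comult (a * b'). G x y) = (\<Sum>(x1, x2)\<leftarrow>comult a. \<Sum>(y1, y2)\<leftarrow>comult b'. G (x1 * y1) (x2 * y2))"
proof -
  have "(\<Sum>(x, y)\<leftarrow>comult (a * b'). G x y) = sum_list (map (F2 G) (tens2 (comult (a * b'))))"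
    by (simp add: sum_F2_tens2)
  also have "\<dots> = sum_list (map (F2 G) (concat (map (\<lambda>(x1, x2). map (\<lambda>(y1, y2). [x1 * y1, x2 * y2]) (comult b')) (comult a))))"
    by (rule tensor_eq_eval[OF mult_te bil_balanced[OF assms]])
  also have "\<dots> = (\<Sum>(x1, x2)\<leftarrow>comult a. \<Sum>(y1, y2)\<leftarrow>comult b'. G (x1 * y1) (x2 * y2))"
    unfolding ev_concat by (rule arg_cong[where f = sum_list], rule map_cong) (auto simp del: map_map simp add: ev2m)
  finally show ?thesis .
qed


lemma smul_sum2: "smul c (\<Sum>(x, y)\<leftarrow>P. h x y) = (\<Sum>(x, y)\<leftarrow>P. smul c (h x y))"
  by (induction P) (auto simp: M.scale_right_distrib)
lemma sum2_smul: "smul (\<Sum>(x, y)\<leftarrow>P. c x y) w = (\<Sum>(x, y)\<leftarrow>P. smul (c x y) w)"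
  by (induction P) (auto simp: M.scale_left_distrib)

lemma smul_left: "smul c a * b' = smul c (a * b')" by (simp add: sm1)
lemma smul_right: "a * smul c b' = smul c (a * b')" by (simp add: sm2)

lemma S_add: "S (x + y) = S x + S y" by (rule hom_add[OF S_hom])
lemma S_scale: "S (smul c x) = smul c (S x)" by (rule hom_scale[OF S_hom])
lemma f_add: "f (x + y) = f x + f y" by (rule dual_add[OF dual_f])
lemma f_scale: "f (smul c x) = c * f x" by (rule dual_scale[OF dual_f])
lemma eps_add: "eps (x + y) = eps x + eps y" by (rule dual_add[OF dual_eps])
lemma eps_scale: "eps (smul c x) = c * eps x" by (rule dual_scale[OF dual_eps])

lemma f_t: "f t = 1" using norm eps_one by (metis mult.right_neutral)

lemma dual_basis:
  obtains es :: "('h \<times> ('h \<Rightarrow> 'k)) list" where "\<And>e \<phi>. (e, \<phi>) \<in> set es \<Longrightarrow> dual_elem smul \<phi>"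
    "\<And>a. a = (\<Sum>(e, \<phi>)\<leftarrow>es. smul (\<phi> a) e)"
proof -
  have "fg_projective smul" using frob by (simp add: frobenius_hom_def)
  then obtain es :: "('h \<times> ('h \<Rightarrow> 'k)) list" where "\<forall>(e, \<phi>) \<in> set es. dual_elem smul \<phi>"
      "\<forall>a. a = (\<Sum>(e, \<phi>)\<leftarrow>es. smul (\<phi> a) e)"
    unfolding fg_projective_def by blast
  then show ?thesis using that by blast
qed

lemma elem_ext:
  assumes "\<And>\<phi>. dual_elem smul \<phi> \<Longrightarrow> \<phi> x = \<phi> y"
  shows "x = y"
proof -
  obtain es :: "('h \<times> ('h \<Rightarrow> 'k)) list" where es: "\<And>e \<phi>. (e, \<phi>) \<in> set es \<Longrightarrow> dual_elem smul \<phi>"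
    "\<And>a. a = (\<Sum>(e, \<phi>)\<leftarrow>es. smul (\<phi> a) e)" using dual_basis by blast
  have "x = (\<Sum>(e, \<phi>)\<leftarrow>es. smul (\<phi> x) e)" by (rule es(2))
  also have "\<dots> = (\<Sum>(e, \<phi>)\<leftarrow>es. smul (\<phi> y) e)" by (rule sum2_cong) (simp add: assms es(1))
  also have "\<dots> = y" by (rule es(2)[symmetric])
  finally show ?thesis .
qed

lemma dist: "dual_elem smul g \<Longrightarrow> (\<Sum>(x1, x2)\<leftarrow>comult x. g x1 * f x2) = g b * f x"
  using distinguished by (metis conv_def)

lemma eps_b: "eps b = 1"
proof -
  have "f t = f (\<Sum>(x, y)\<leftarrow>comult t. smul (eps x) y)" by (simp add: counitL)
  also have "\<dots> = (\<Sum>(x, y)\<leftarrow>comult t. eps x * f y)" by (simp add: dual_sum2[OF dual_f] f_scale)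
  also have "\<dots> = eps b * f t" by (rule dist[OF dual_eps])
  finally show ?thesis using f_t by simp
qed

lemma B: "(\<Sum>(x1, x2)\<leftarrow>comult x. smul (f x2) x1) = smul (f x) b"
proof (rule elem_ext)
  fix \<phi> assume d: "dual_elem smul \<phi>"
  have "\<phi> (\<Sum>(x1, x2)\<leftarrow>comult x. smul (f x2) x1) = (\<Sum>(x1, x2)\<leftarrow>comult x. \<phi> x1 * f x2)"
    by (simp add: dual_sum2[OF d] dual_scale[OF d] mult.commute)
  also have "\<dots> = \<phi> b * f x" by (rule dist[OF d])
  also have "\<dots> = \<phi> (smul (f x) b)" by (simp add: dual_scale[OF d] mult.commute)
  finally show "\<phi> (\<Sum>(x1, x2)\<leftarrow>comult x. smul (f x2) x1) = \<phi> (smul (f x) b)" .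
qed

lemma bil_gh: "dual_elem smul g \<Longrightarrow> dual_elem smul h \<Longrightarrow> bil smul (\<lambda>x y. g x * h y)"
  unfolding bil_def by (simp add: dual_add dual_scale algebra_simps)

lemma conv_dual:
  assumes g: "dual_elem smul g" and h: "dual_elem smul h"
  shows "dual_elem smul (conv comult g h)"
  unfolding dual_elem_def module_hom_def module_hom_axioms_def
proof (intro conjI allI)
  show "module smul" by (rule mod)
  show "module ((*) :: 'k \<Rightarrow> 'k \<Rightarrow> 'k)" by (rule module_mult)
  fix b1 b2
  show "conv comult g h (b1 + b2) = conv comult g h b1 + conv comult g h b2"
    unfolding conv_def using L_add[OF bil_gh[OF g h]] by simp
next
  fix r b1
  have "conv comult g h (smul r b1) = (\<Sum>(x, y)\<leftarrow>comult b1. g (smul r x) * h y)"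
    unfolding conv_def using L_smul[OF bil_gh[OF g h]] by simp
  also have "\<dots> = r * conv comult g h b1"
    unfolding conv_def by (simp add: dual_scale[OF g] sum2_mult_left mult.assoc)
  finally show "conv comult g h (smul r b1) = r * conv comult g h b1" .
qed

lemma tri_ghk: "dual_elem smul g \<Longrightarrow> dual_elem smul h \<Longrightarrow> dual_elem smul k \<Longrightarrow> tri smul (\<lambda>x y z. g x * h y * k z)"
  unfolding tri_def by (simp add: dual_add dual_scale algebra_simps)

lemma gl_val:
  assumes g: "dual_elem smul g" and h: "dual_elem smul h"
  shows "(\<Sum>(x, y)\<leftarrow>comult b. g x * h y) = g b * h b"
proof -
  let ?k = "conv comult g h"
  have kd: "dual_elem smul ?k" by (rule conv_dual[OF g h])
  have "(\<Sum>(x, y)\<leftarrow>comult t. ?k x * f y) = ?k b * f t" by (rule dist[OF kd])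
  then have 1: "(\<Sum>(x, y)\<leftarrow>comult t. ?k x * f y) = ?k b" using f_t by simp
  have "(\<Sum>(x, y)\<leftarrow>comult t. ?k x * f y) = (\<Sum>(x, y)\<leftarrow>comult t. \<Sum>(x1, x2)\<leftarrow>comult x. g x1 * h x2 * f y)"
    unfolding conv_def by (simp add: sum2_mult_right)
  also have "\<dots> = (\<Sum>(x, y)\<leftarrow>comult t. \<Sum>(y1, y2)\<leftarrow>comult y. g x * h y1 * f y2)"
    by (rule L_coassoc[OF tri_ghk[OF g h dual_f], symmetric])
  also have "\<dots> = (\<Sum>(x, y)\<leftarrow>comult t. g x * (\<Sum>(y1, y2)\<leftarrow>comult y. h y1 * f y2))"
    by (simp add: sum2_mult_left mult.assoc)
  also have "\<dots> = (\<Sum>(x, y)\<leftarrow>comult t. g x * (h b * f y))"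
    by (simp add: dist[OF h])
  also have "\<dots> = h b * (\<Sum>(x, y)\<leftarrow>comult t. g x * f y)"
    by (simp add: sum2_mult_left algebra_simps)
  also have "\<dots> = h b * g b" by (simp add: dist[OF g] f_t)
  finally show ?thesis using 1 unfolding conv_def by (simp add: mult.commute)
qed

lemma cm_b: "tensor_eq smul (tens2 (comult b)) [[b, b]]"
proof -
  obtain es :: "('h \<times> ('h \<Rightarrow> 'k)) list" where es: "\<And>e \<phi>. (e, \<phi>) \<in> set es \<Longrightarrow> dual_elem smul \<phi>"
    "\<And>a. a = (\<Sum>(e, \<phi>)\<leftarrow>es. smul (\<phi> a) e)" using dual_basis by blast
  have s1: "tensor_eq smul (tens2 (comult b)) (map (\<lambda>(x, y). [x, \<Sum>(p, q)\<leftarrow>comult b. smul (y p) q]) es)"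
    by (rule sep1[where \<psi> = "\<lambda>\<phi> a. \<phi> a"]) (rule es(2))
  have s2: "tensor_eq smul (tens2 [(b, b)]) (map (\<lambda>(x, y). [x, \<Sum>(p, q)\<leftarrow>[(b, b)]. smul (y p) q]) es)"
    by (rule sep1[where \<psi> = "\<lambda>\<phi> a. \<phi> a"]) (rule es(2))
  have key: "(\<Sum>(p, q)\<leftarrow>comult b. smul (\<phi> p) q) = smul (\<phi> b) b" if "(e, \<phi>) \<in> set es" for e \<phi>
  proof -
    have d: "dual_elem smul \<phi>" using that by (rule es(1))
    show ?thesis
    proof (rule elem_ext)
      fix \<psi> assume d2: "dual_elem smul \<psi>"
      have "\<psi> (\<Sum>(p, q)\<leftarrow>comult b. smul (\<phi> p) q) = (\<Sum>(p, q)\<leftarrow>comult b. \<phi> p * \<psi> q)"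
        by (simp add: dual_sum2[OF d2] dual_scale[OF d2])
      also have "\<dots> = \<phi> b * \<psi> b" by (rule gl_val[OF d d2])
      finally show "\<psi> (\<Sum>(p, q)\<leftarrow>comult b. smul (\<phi> p) q) = \<psi> (smul (\<phi> b) b)" by (simp add: dual_scale[OF d2])
    qed
  qed
  have eq: "map (\<lambda>(x, y). [x, \<Sum>(p, q)\<leftarrow>comult b. smul (y p) q]) es = map (\<lambda>(x, y). [x, \<Sum>(p, q)\<leftarrow>[(b, b)]. smul (y p) q]) es"
    by (rule map_cong[OF refl]) (auto simp: key)
  show ?thesis using te_trans[OF s1[unfolded eq] te_sym[OF s2]] by (simp add: tens2_def)
qed

lemma gl: "bil smul G \<Longrightarrow> (\<Sum>(x, y)\<leftarrow>comult b. G x y) = G b b"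
  using tensor_eq_eval[OF cm_b bil_balanced, of G] by (simp add: sum_F2_tens2 F2_def)

lemma bSb: "b * S b = 1"
proof -
  have "bil smul (\<lambda>x y. x * S y)"
    unfolding bil_def by (simp add: S_add S_scale smul_left smul_right algebra_simps)
  then have "(\<Sum>(x, y)\<leftarrow>comult b. x * S y) = b * S b" by (rule gl)
  then show ?thesis using antiR[of b] eps_b by simp
qed

lemma Sbb: "S b * b = 1"
proof -
  have "bil smul (\<lambda>x y. S x * y)"
    unfolding bil_def by (simp add: S_add S_scale smul_left smul_right algebra_simps)
  then have "(\<Sum>(x, y)\<leftarrow>comult b. S x * y) = S b * b" by (rule gl)
  then show ?thesis using antiL[of b] eps_b by simp
qed


lemma bSb': "b * (S b * x) = x" by (simp add: mult.assoc[symmetric] bSb)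

lemma bil_Sx: "bil smul (\<lambda>x y. S x * y)"
  unfolding bil_def by (simp add: S_add S_scale smul_left smul_right algebra_simps)

lemma L1: "S (u * b) = S b * S u"
proof -
  have e1: "smul (eps w) 1 = (\<Sum>(p, q)\<leftarrow>comult w. S (p * b) * (q * b))" for w
  proof -
    have "smul (eps w) 1 = smul (eps (w * b)) 1" by (simp add: eps_mult eps_b)
    also have "\<dots> = (\<Sum>(x, y)\<leftarrow>comult (w * b). S x * y)" by (rule antiL[symmetric])
    also have "\<dots> = (\<Sum>(p, q)\<leftarrow>comult w. \<Sum>(y1, y2)\<leftarrow>comult b. S (p * y1) * (q * y2))"
      by (rule L_mult[OF bil_Sx])
    also have "\<dots> = (\<Sum>(p, q)\<leftarrow>comult w. S (p * b) * (q * b))"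
    proof (rule sum2_cong)
      fix p q
      have "bil smul (\<lambda>x y. S (p * x) * (q * y))"
        unfolding bil_def by (simp add: S_add S_scale smul_left smul_right algebra_simps)
      then show "(\<Sum>(y1, y2)\<leftarrow>comult b. S (p * y1) * (q * y2)) = S (p * b) * (q * b)" by (rule gl)
    qed
    finally show ?thesis .
  qed
  have tri1: "tri smul (\<lambda>p q r. S (p * b) * q * S r)"
    unfolding tri_def by (simp add: S_add S_scale smul_left smul_right algebra_simps)
  have "S b * S u = S b * S (\<Sum>(x, y)\<leftarrow>comult u. smul (eps x) y)" by (simp add: counitL)
  also have "\<dots> = (\<Sum>(x, y)\<leftarrow>comult u. smul (eps x) 1 * (S b * S y))"
    by (simp add: hom_sum2[OF S_hom] S_scale sum2_mult_left smul_left smul_right)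
  also have "\<dots> = (\<Sum>(x, y)\<leftarrow>comult u. (\<Sum>(p, q)\<leftarrow>comult x. S (p * b) * (q * b)) * (S b * S y))"
    by (simp add: e1)
  also have "\<dots> = (\<Sum>(x, y)\<leftarrow>comult u. \<Sum>(p, q)\<leftarrow>comult x. S (p * b) * q * S y)"
    by (simp add: sum2_mult_right mult.assoc bSb')
  also have "\<dots> = (\<Sum>(x, y)\<leftarrow>comult u. \<Sum>(y1, y2)\<leftarrow>comult y. S (x * b) * y1 * S y2)"
    by (rule L_coassoc[OF tri1, symmetric])
  also have "\<dots> = (\<Sum>(x, y)\<leftarrow>comult u. S (x * b) * smul (eps y) 1)"
  proof (rule sum2_cong)
    fix x y
    show "(\<Sum>(y1, y2)\<leftarrow>comult y. S (x * b) * y1 * S y2) = S (x * b) * smul (eps y) 1"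
      by (simp add: antiR[symmetric] sum2_mult_left mult.assoc)
  qed
  also have "\<dots> = S (\<Sum>(x, y)\<leftarrow>comult u. smul (eps y) x * b)"
    by (simp add: hom_sum2[OF S_hom] S_scale smul_right smul_left)
  also have "(\<Sum>(x, y)\<leftarrow>comult u. smul (eps y) x * b) = (\<Sum>(x, y)\<leftarrow>comult u. smul (eps y) x) * b"
    by (simp add: sum2_mult_right)
  also have "\<dots> = u * b" by (simp add: counitR)
  finally show ?thesis by simp
qed

lemma bil_fs: "bil smul (\<lambda>u v. smul (f u) v)"
  unfolding bil_def by (simp add: f_add f_scale M.scale_left_distrib M.scale_right_distrib mult.commute)

lemma A: "(\<Sum>(x, y)\<leftarrow>comult t. smul (f (x * z)) y) = S z"
proof -
  have "S z = S (\<Sum>(p, q)\<leftarrow>comult z. smul (eps p) q)" by (simp add: counitL)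
  also have "\<dots> = (\<Sum>(p, q)\<leftarrow>comult z. smul (f (t * p)) 1 * S q)"
    by (simp add: hom_sum2[OF S_hom] S_scale norm smul_left)
  also have "\<dots> = (\<Sum>(p, q)\<leftarrow>comult z. (\<Sum>(x, y)\<leftarrow>comult (t * p). smul (f x) y) * S q)"
    by (simp add: rint)
  also have "\<dots> = (\<Sum>(p, q)\<leftarrow>comult z. (\<Sum>(x1, x2)\<leftarrow>comult t. \<Sum>(p1, p2)\<leftarrow>comult p. smul (f (x1 * p1)) (x2 * p2)) * S q)"
    by (rule sum2_cong) (simp add: L_mult[OF bil_fs])
  also have "\<dots> = (\<Sum>(p, q)\<leftarrow>comult z. \<Sum>(x1, x2)\<leftarrow>comult t. \<Sum>(p1, p2)\<leftarrow>comult p. smul (f (x1 * p1)) (x2 * p2 * S q))"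
    by (simp add: sum2_mult_right smul_left)
  also have "\<dots> = (\<Sum>(x1, x2)\<leftarrow>comult t. \<Sum>(p, q)\<leftarrow>comult z. \<Sum>(p1, p2)\<leftarrow>comult p. smul (f (x1 * p1)) (x2 * p2 * S q))"
    by (rule sum2_swap)
  also have "\<dots> = (\<Sum>(x1, x2)\<leftarrow>comult t. \<Sum>(p, q)\<leftarrow>comult z. \<Sum>(q1, q2)\<leftarrow>comult q. smul (f (x1 * p)) (x2 * q1 * S q2))"
  proof (rule sum2_cong)
    fix x1 x2
    have "tri smul (\<lambda>p q r. smul (f (x1 * p)) (x2 * q * S r))"
      unfolding tri_def by (simp add: f_add f_scale S_add S_scale smul_left smul_right algebra_simps M.scale_left_distrib M.scale_right_distrib)
    then show "(\<Sum>(p, q)\<leftarrow>comult z. \<Sum>(p1, p2)\<leftarrow>comult p. smul (f (x1 * p1)) (x2 * p2 * S q)) =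
         (\<Sum>(p, q)\<leftarrow>comult z. \<Sum>(q1, q2)\<leftarrow>comult q. smul (f (x1 * p)) (x2 * q1 * S q2))"
      by (rule L_coassoc[symmetric])
  qed
  also have "\<dots> = (\<Sum>(x1, x2)\<leftarrow>comult t. \<Sum>(p, q)\<leftarrow>comult z. smul (f (x1 * p)) (x2 * smul (eps q) 1))"
  proof (rule sum2_cong, rule sum2_cong)
    fix x1 x2 p q
    show "(\<Sum>(q1, q2)\<leftarrow>comult q. smul (f (x1 * p)) (x2 * q1 * S q2)) = smul (f (x1 * p)) (x2 * smul (eps q) 1)"
      by (simp add: antiR[symmetric] sum2_mult_left smul_sum2 mult.assoc)
  qed
  also have "\<dots> = (\<Sum>(x1, x2)\<leftarrow>comult t. \<Sum>(p, q)\<leftarrow>comult z. smul (f (x1 * smul (eps q) p)) x2)"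
    by (simp add: smul_right smul_left f_scale mult.commute)
  also have "\<dots> = (\<Sum>(x1, x2)\<leftarrow>comult t. smul (f (x1 * z)) x2)"
  proof (rule sum2_cong)
    fix x1 x2
    have "f (x1 * z) = f (x1 * (\<Sum>(p, q)\<leftarrow>comult z. smul (eps q) p))" by (simp only: counitR)
    also have "\<dots> = (\<Sum>(p, q)\<leftarrow>comult z. f (x1 * smul (eps q) p))"
      by (simp add: sum2_mult_left dual_sum2[OF dual_f])
    finally show "(\<Sum>(p, q)\<leftarrow>comult z. smul (f (x1 * smul (eps q) p)) x2) = smul (f (x1 * z)) x2"
      by (simp add: sum2_smul)
  qed
  finally show ?thesis by simp
qed

lemma E: "(\<Sum>(x, y)\<leftarrow>comult t. S x * smul (f (y * z)) b) = z"
proof -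
  have bilB: "bil smul (\<lambda>w1 w2. smul (f w2) w1)"
    unfolding bil_def by (simp add: f_add f_scale M.scale_left_distrib M.scale_right_distrib mult.commute)
  have "(\<Sum>(x, y)\<leftarrow>comult t. S x * smul (f (y * z)) b) =
        (\<Sum>(x, y)\<leftarrow>comult t. S x * (\<Sum>(w1, w2)\<leftarrow>comult (y * z). smul (f w2) w1))"
    by (simp add: B)
  also have "\<dots> = (\<Sum>(x, y)\<leftarrow>comult t. S x * (\<Sum>(y1, y2)\<leftarrow>comult y. \<Sum>(p, q)\<leftarrow>comult z. smul (f (y2 * q)) (y1 * p)))"
    by (simp add: L_mult[OF bilB])
  also have "\<dots> = (\<Sum>(x, y)\<leftarrow>comult t. S x * (\<Sum>(p, q)\<leftarrow>comult z. \<Sum>(y1, y2)\<leftarrow>comult y. smul (f (y2 * q)) (y1 * p)))"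
  proof (rule sum2_cong)
    fix x y
    show "S x * (\<Sum>(y1, y2)\<leftarrow>comult y. \<Sum>(p, q)\<leftarrow>comult z. smul (f (y2 * q)) (y1 * p)) =
          S x * (\<Sum>(p, q)\<leftarrow>comult z. \<Sum>(y1, y2)\<leftarrow>comult y. smul (f (y2 * q)) (y1 * p))"
      by (rule arg_cong[where f = "(*) (S x)"]) (rule sum2_swap)
  qed
  also have "\<dots> = (\<Sum>(x, y)\<leftarrow>comult t. \<Sum>(p, q)\<leftarrow>comult z. \<Sum>(y1, y2)\<leftarrow>comult y. S x * y1 * smul (f (y2 * q)) p)"
    by (simp add: sum2_mult_left smul_right mult.assoc)
  also have "\<dots> = (\<Sum>(p, q)\<leftarrow>comult z. \<Sum>(x, y)\<leftarrow>comult t. \<Sum>(y1, y2)\<leftarrow>comult y. S x * y1 * smul (f (y2 * q)) p)"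
    by (rule sum2_swap)
  also have "\<dots> = (\<Sum>(p, q)\<leftarrow>comult z. \<Sum>(x, y)\<leftarrow>comult t. \<Sum>(x1, x2)\<leftarrow>comult x. S x1 * x2 * smul (f (y * q)) p)"
  proof (rule sum2_cong)
    fix p q
    have "tri smul (\<lambda>a c d. S a * c * smul (f (d * q)) p)"
      unfolding tri_def by (simp add: f_add f_scale S_add S_scale smul_left smul_right algebra_simps M.scale_left_distrib M.scale_right_distrib)
    then show "(\<Sum>(x, y)\<leftarrow>comult t. \<Sum>(y1, y2)\<leftarrow>comult y. S x * y1 * smul (f (y2 * q)) p) =
       (\<Sum>(x, y)\<leftarrow>comult t. \<Sum>(x1, x2)\<leftarrow>comult x. S x1 * x2 * smul (f (y * q)) p)"
      by (rule L_coassoc)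
  qed
  also have "\<dots> = (\<Sum>(p, q)\<leftarrow>comult z. \<Sum>(x, y)\<leftarrow>comult t. smul (eps x) 1 * smul (f (y * q)) p)"
    by (simp add: antiL[symmetric] sum2_mult_right)
  also have "\<dots> = (\<Sum>(p, q)\<leftarrow>comult z. smul (f (t * q)) p)"
  proof (rule sum2_cong)
    fix p q
    have "f (t * q) = f ((\<Sum>(x, y)\<leftarrow>comult t. smul (eps x) y) * q)" by (simp only: counitL)
    also have "\<dots> = (\<Sum>(x, y)\<leftarrow>comult t. eps x * f (y * q))"
      by (simp add: sum2_mult_right dual_sum2[OF dual_f] smul_left f_scale)
    finally show "(\<Sum>(x, y)\<leftarrow>comult t. smul (eps x) 1 * smul (f (y * q)) p) = smul (f (t * q)) p"
      by (simp add: sum2_smul smul_left)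
  qed
  also have "\<dots> = (\<Sum>(p, q)\<leftarrow>comult z. smul (eps q) p)" by (simp add: norm)
  also have "\<dots> = z" by (rule counitR)
  finally show ?thesis .
qed

lemma main:
  "tensor_eq smul (map (\<lambda>(x, y). [y, x]) (comult t)) (map (\<lambda>(x, y). [S b * S (S x), y]) (comult t))"
proof -
  obtain xys :: "('h \<times> 'h) list" where xys: "\<And>a. (\<Sum>(x, y)\<leftarrow>xys. smul (f (a * x)) y) = a"
    using frob unfolding frobenius_hom_def by blast
  have h: "\<And>a. a = (\<Sum>(x, y)\<leftarrow>xys. smul (f (a * x)) y)" using xys by simp
  let ?P1 = "map (\<lambda>(x, y). (y, x)) (comult t)"
  let ?P2 = "map (\<lambda>(x, y). (S b * S (S x), y)) (comult t)"
  have s1: "tensor_eq smul (tens2 ?P1) (map (\<lambda>(x, y). [\<Sum>(p, q)\<leftarrow>?P1. smul (f (q * x)) p, y]) xys)"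
    by (rule sep2[where \<psi> = "\<lambda>x a. f (a * x)"]) (rule h)
  have s2: "tensor_eq smul (tens2 ?P2) (map (\<lambda>(x, y). [\<Sum>(p, q)\<leftarrow>?P2. smul (f (q * x)) p, y]) xys)"
    by (rule sep2[where \<psi> = "\<lambda>x a. f (a * x)"]) (rule h)
  have k1: "(\<Sum>(p, q)\<leftarrow>?P1. smul (f (q * x)) p) = S x" for x
    by (simp only: sum_map_swap A)
  have k2: "(\<Sum>(p, q)\<leftarrow>?P2. smul (f (q * x)) p) = S x" for x
  proof -
    have "(\<Sum>(p, q)\<leftarrow>?P2. smul (f (q * x)) p) = (\<Sum>(p, q)\<leftarrow>comult t. smul (f (q * x)) (S b * S (S p)))"
      by (rule sum_map_fst)
    also have "\<dots> = (\<Sum>(p, q)\<leftarrow>comult t. smul (f (q * x)) (S (S p * b)))" by (simp add: L1)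
    also have "\<dots> = S (\<Sum>(p, q)\<leftarrow>comult t. S p * smul (f (q * x)) b)"
      by (simp add: hom_sum2[OF S_hom] S_scale smul_right)
    also have "\<dots> = S x" by (simp add: E)
    finally show ?thesis .
  qed
  have eq: "map (\<lambda>(x, y). [\<Sum>(p, q)\<leftarrow>?P1. smul (f (q * x)) p, y]) xys = map (\<lambda>(x, y). [\<Sum>(p, q)\<leftarrow>?P2. smul (f (q * x)) p, y]) xys"
    by (rule map_cong[OF refl]) (auto simp only: k1 k2 split: prod.splits)
  have "tensor_eq smul (tens2 ?P1) (tens2 ?P2)" using te_trans[OF s1[unfolded eq] te_sym[OF s2]] .
  moreover have "tens2 ?P1 = map (\<lambda>(x, y). [y, x]) (comult t)" by (induction "comult t") (auto simp: tens2_def)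
  moreover have "tens2 ?P2 = map (\<lambda>(x, y). [S b * S (S x), y]) (comult t)" by (induction "comult t") (auto simp: tens2_def)
  ultimately show ?thesis by simp
qed

end


theorem mainTheorem1:
  fixes smul :: "'k::comm_ring_1 \<Rightarrow> 'h::ring_1 \<Rightarrow> 'h"
    and comult :: "'h \<Rightarrow> ('h \<times> 'h) list"
    and eps :: "'h \<Rightarrow> 'k" and f :: "'h \<Rightarrow> 'k"
    and S :: "'h \<Rightarrow> 'h" and t b :: 'h
  assumes FH: "FH_algebra smul comult eps f"
    and S: "antipode smul comult eps S"
    and norm: "\<forall>x. f (t * x) = eps x"
    and distinguished: "\<forall>g. dual_elem smul g \<longrightarrow> conv comult g f = (\<lambda>x. g b * f x)"
  shows "\<exists>binv. binv * b = 1 \<and> b * binv = 1 \<and>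
           tensor_eq smul (map (\<lambda>(x, y). [y, x]) (comult t))
                          (map (\<lambda>(x, y). [binv * S (S x), y]) (comult t))"
proof -
  interpret fh smul comult eps f S t b by (rule fh.intro[OF FH S norm distinguished])
  show ?thesis using Sbb bSb main by blast
qed

end
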